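(* Assume $a/b>\sqrt{2}$. Every self-intersected 4-periodic of the elliptic billiard $x^2/a^2+y^2/b^2=1$ has perimeter $$L=\frac{4a^2}{c},\qquad c^2=a^2-b^2.$$ In particular the perimeter is the same for all members of the family.
   Context: The elliptic billiard is the ellipse $\mathcal{E}: x^2/a^2+y^2/b^2=1$ with $a>b>0$. Let $c=\sqrt{a^2-b^2}$; the foci are $f_{1}=(-c,0)$ and $f_{2}=(c,0)$. An $N$-periodic is a closed billiard trajectory with $N$ bounces $P_1,\dots,P_N\in\mathcal{E}$: at each $P_i$ the normal to $\mathcal{E}$ bisects the angle between the segments $P_{i-1}P_i$ and $P_iP_{i+1}$ (indices mod $N$). All segments of such a trajectory are tangent to a fixed conic confocal with $\mathcal{E}$ (the caustic). Self-intersected 4-periodics: for $a/b>\sqrt2$ these are the 4-periodics whose caustic is the confocal hyperbola $x^2/a''^2-y^2/b''^2=1$ with $a''=a\sqrt{a^2-2b^2}/c$ and $b''=b^2/c$. They form a one-parameter family which can be parametrized by $u$ with $|u|\le u_{\max}:=\frac{a}{c^2}\sqrt{a^2-2b^2}$ via $P_1=(au,\,b\sqrt{1-u^2})$, $P_3=(-au,\,b\sqrt{1-u^2})$, $P_2=\left(-\frac{a\sqrt{a^2(a^2-2b^2)-c^4u^2}}{c^2\sqrt{1-u^2}},\,-\frac{b^3}{c^2\sqrt{1-u^2}}\right)$, $P_4=\left(\frac{a\sqrt{a^2(a^2-2b^2)-c^4u^2}}{c^2\sqrt{1-u^2}},\,-\frac{b^3}{c^2\sqrt{1-u^2}}\right)$.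 The perimeter is $|P_1P_2|+|P_2P_3|+|P_3P_4|+|P_4P_1|$. *)

theory Defs
  imports "HOL-Analysis.Analysis"
begin

definition foc :: "real \<Rightarrow> real \<Rightarrow> real" where
  "foc a b = sqrt (a^2 - b^2)"

definition umax :: "real \<Rightarrow> real \<Rightarrow> real" where
  "umax a b = a / (foc a b)^2 * sqrt (a^2 - 2*b^2)"

definition P1 :: "real \<Rightarrow> real \<Rightarrow> real \<Rightarrow> real \<times> real" where
  "P1 a b u = (a*u, b * sqrt (1 - u^2))"

definition P3 :: "real \<Rightarrow> real \<Rightarrow> real \<Rightarrow> real \<times> real" where
  "P3 a b u = (-(a*u), b * sqrt (1 - u^2))"

definition P2 :: "real \<Rightarrow> real \<Rightarrow> real \<Rightarrow> real \<times> real" where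
  "P2 a b u = (let c = foc a b in
     (-(a * sqrt (a^2*(a^2 - 2*b^2) - c^4*u^2) / (c^2 * sqrt (1 - u^2))),
      -(b^3 / (c^2 * sqrt (1 - u^2)))))"

definition P4 :: "real \<Rightarrow> real \<Rightarrow> real \<Rightarrow> real \<times> real" where
  "P4 a b u = (let c = foc a b in
     (a * sqrt (a^2*(a^2 - 2*b^2) - c^4*u^2) / (c^2 * sqrt (1 - u^2)),
      -(b^3 / (c^2 * sqrt (1 - u^2)))))"

definition perimeter4 :: "real \<Rightarrow> real \<Rightarrow> real \<Rightarrow> real" where
  "perimeter4 a b u = dist (P1 a b u) (P2 a b u) + dist (P2 a b u) (P3 a b u)
     + dist (P3 a b u) (P4 a b u) + dist (P4 a b u) (P1 a b u)"

end

theory Submission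
  imports Defs
begin

lemma key:
  fixes a b u r s c :: real
  assumes "c>0" "s>0" "r^2 = a^2 * (a^2-2 * b^2) - c^4 * u^2" "s^2 = 1-u^2" "c^2=a^2-b^2"
  shows "(a * u + a * r/(c^2 * s))^2 + (b * s + b^3/(c^2 * s))^2 = (a^2/c + u * r/(c * s))^2"
        "(a * u - a * r/(c^2 * s))^2 + (b * s + b^3/(c^2 * s))^2 = (a^2/c - u * r/(c * s))^2"
proof -
  have "c^4 = (c^2)^2" by algebra
  show "(a * u + a * r/(c^2 * s))^2 + (b * s + b^3/(c^2 * s))^2 = (a^2/c + u * r/(c * s))^2"
    using assms apply (simp add: field_simps power2_eq_square) by algebra
  show "(a * u - a * r/(c^2 * s))^2 + (b * s + b^3/(c^2 * s))^2 = (a^2/c - u * r/(c * s))^2"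
    using assms apply (simp add: field_simps power2_eq_square) by algebra
qed

theorem mainTheorem1:
  fixes a b u :: real
  assumes "a > b" "b > 0" "a / b > sqrt 2" "\<bar>u\<bar> \<le> umax a b"
  shows "perimeter4 a b u = 4 * a^2 / foc a b"
proof -
  define c where "c = foc a b"
  have c2: "c^2 = a^2 - b^2" unfolding c_def foc_def using assms by (simp add: power_strict_mono)
  have cpos: "c > 0" unfolding c_def foc_def using assms
    by (simp add: power_strict_mono)
  have "sqrt 2 * b < a" using assms by (simp add: pos_less_divide_eq)
  hence "(sqrt 2 * b)^2 < a^2" using assms
    by (metis power_strict_mono real_sqrt_ge_zero mult_nonneg_nonneg less_imp_le zero_less_numeral zero_less_two)
  hence ab2: "a^2 - 2*b^2 > 0" by (simp add: power_mult_distrib)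
  have "u^2 \<le> (umax a b)^2" using assms(4)
    by (metis abs_le_square_iff abs_of_nonneg abs_ge_zero order_trans)
  also have "(umax a b)^2 = a^2*(a^2-2*b^2) / c^4"
    unfolding umax_def c_def[symmetric] using ab2 by (simp add: power_divide power_mult_distrib)
  finally have uu0: "u^2 \<le> a^2*(a^2-2*b^2) / c^4" .
  have c4p: "c^4 > 0" using cpos by simp
  have uu: "c^4 * u^2 \<le> a^2*(a^2-2*b^2)" using uu0 pos_le_divide_eq[OF c4p] by (metis mult.commute)
  have c4: "c^4 = (a^2-b^2)^2" using c2 by (metis power_mult numeral_Bit0 mult_2 numeral_One)
  have u1: "u^2 < 1"
  proof -
    have "a^2*(a^2-2*b^2) < c^4" using c4 assms by (simp add: power2_eq_square algebra_simps)
    hence "c^4*u^2 < c^4" using uu by linarith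
    thus ?thesis using cpos by simp
  qed
  define s where "s = sqrt (1 - u^2)"
  define r where "r = sqrt (a^2*(a^2 - 2*b^2) - c^4*u^2)"
  have spos: "s > 0" using u1 unfolding s_def by simp
  have s2: "s^2 = 1-u^2" using u1 unfolding s_def by simp
  have r2: "r^2 = a^2*(a^2 - 2*b^2) - c^4*u^2" unfolding r_def by (rule real_sqrt_pow2) (use uu in linarith)
  have r0: "r \<ge> 0" unfolding r_def by (rule real_sqrt_ge_zero) (use uu in linarith)
  have sq: "(a^2* s)^2 - (u*r)^2 = (a^2 - c^2*u^2)^2"
    proof -
    have "(a^2 * s)^2 - (u*r)^2 = a^4* s^2 - u^2*r^2" by (simp add: power_mult_distrib flip: power_mult)
    also have "... = a^4*(1-u^2) - u^2*(a^2*(a^2 - 2*b^2) - (a^2-b^2)^2*u^2)" using s2 r2 c4 by simp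
    also have "... = (a^2 - (a^2-b^2)*u^2)^2" by (simp add: power2_eq_square power4_eq_xxxx algebra_simps)
    finally show ?thesis using c2 by simp
  qed
  have "\<bar>u*r\<bar> \<le> a^2* s"
  proof -
    have "(u*r)^2 \<le> (a^2* s)^2" using sq by (metis diff_ge_0_iff_ge zero_le_power2)
    hence "\<bar>u*r\<bar>^2 \<le> (a^2 * s)^2" by simp
    thus ?thesis by (rule power2_le_imp_le) (use spos in simp)
  qed
  hence nn1: "a^2/c + u*r/(c* s) \<ge> 0" and nn2: "a^2/c - u*r/(c* s) \<ge> 0"
    using cpos spos by (auto simp: field_simps abs_le_iff)
  note K = key[OF cpos spos r2 s2 c2]
  have P1: "P1 a b u = (a*u, b* s)" unfolding P1_def s_def by simp
  have P3: "P3 a b u = (-(a*u), b* s)" unfolding P3_def s_def by simp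
  have P2: "P2 a b u = (-(a*r/(c^2* s)), -(b^3/(c^2* s)))" unfolding P2_def c_def[symmetric] s_def r_def Let_def by simp
  have P4: "P4 a b u = (a*r/(c^2* s), -(b^3/(c^2* s)))" unfolding P4_def c_def[symmetric] s_def r_def Let_def by simp
  have d12: "dist (P1 a b u) (P2 a b u) = a^2/c + u*r/(c* s)"
    unfolding P1 P2 dist_Pair_Pair using K(1) nn1 by (simp add: dist_real_def)
  have d23: "dist (P2 a b u) (P3 a b u) = a^2/c - u*r/(c* s)"
  proof -
    have "dist (P2 a b u) (P3 a b u) = sqrt ((a*u - a*r/(c^2* s))^2 + (b* s + b^3/(c^2* s))^2)"
      unfolding P3 P2 dist_Pair_Pair dist_real_def by (simp add: power2_commute)
    thus ?thesis using K(2) nn2 by simp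
  qed
  have d34: "dist (P3 a b u) (P4 a b u) = a^2/c + u*r/(c* s)"
  proof -
    have "dist (P3 a b u) (P4 a b u) = sqrt ((a*u + a*r/(c^2* s))^2 + (b* s + b^3/(c^2* s))^2)"
      proof -
      have e: "(- (a*u) - a*r/(c^2 * s))^2 = (a*u + a*r/(c^2 * s))^2" by (simp add: power2_eq_square algebra_simps)
      show ?thesis unfolding P3 P4 dist_Pair_Pair dist_real_def using e by (simp add: power2_commute)
    qed
    thus ?thesis using K(1) nn1 by simp
  qed
  have d41: "dist (P4 a b u) (P1 a b u) = a^2/c - u*r/(c* s)"
  proof -
    have "dist (P4 a b u) (P1 a b u) = sqrt ((a*u - a*r/(c^2* s))^2 + (b* s + b^3/(c^2* s))^2)"
      unfolding P1 P4 dist_Pair_Pair dist_real_def by (simp add: power2_commute)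
    thus ?thesis using K(2) nn2 by simp
  qed
  show ?thesis unfolding perimeter4_def d12 d23 d34 d41 c_def[symmetric] by simp
qed

end
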